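(* Let $A_1,\dots,A_N$ be $n\times n$ nonnegative matrices that commute pairwise in the max algebra (i.e. $A_r\otimes A_s=A_s\otimes A_r$ for all $r,s$), with $\mu(A_i)\le 1$ for every $1\le i\le N$. Let $p\in\mathbb{N}$ and let $\omega=(\omega_1\,\omega_2\cdots\omega_p)\in\Sigma_N^p$ be a $p$-lettered word in which the letter $i$ occurs $p_i$ times, and let $A_\omega=A_{\omega_p}\otimes A_{\omega_{p-1}}\otimes\cdots\otimes A_{\omega_1}$. Then there exists a positive integer $q$ such that for every $1\le j\le q$ and every $i$, the limit $\widetilde{A_i^{(j)}}:=\lim_{k\to\infty}A_i^{kq+j}$ exists, and \[ \lim_{k\to\infty} A_\omega^{kq+j} \;=\; \bigotimes_{i=1}^{N}\left(\widetilde{A_i^{(j)}}\right)^{p_i}. \]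
   Context: Max algebra: on $\mathbb{R}_+=[0,\infty)$, $a\oplus b=\max\{a,b\}$, $a\otimes b=ab$; for nonnegative matrices $(A\otimes B)_{ij}=\max_k a_{ik}b_{kj}$, and all matrix powers and products are taken with respect to $\otimes$ (with $A^0=I$). Limits are entrywise. $\mu(A)$ denotes the maximum circuit geometric mean of $A$: in the digraph with an edge $i\to j$ of weight $a_{ij}$ whenever $a_{ij}>0$, the circuit geometric mean of a simple circuit $(i_1,i_2),\dots,(i_\ell,i_1)$ is $(a_{i_1i_2}\cdots a_{i_\ell i_1})^{1/\ell}$, and $\mu(A)$ is the maximum of these. $\Sigma_N^p=\{(\omega_1\cdots\omega_p):1\le\omega_i\le N\}$ is the set of $p$-lettered words on $\{1,\dots,N\}$. *)

theory Defs
  imports "HOL-Analysis.Analysis"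
begin

type_synonym 'n mat = "'n \<Rightarrow> 'n \<Rightarrow> real"

definition nonneg_mat :: "('n::finite) mat \<Rightarrow> bool" where
  "nonneg_mat A \<longleftrightarrow> (\<forall>a b. 0 \<le> A a b)"

definition mmult :: "('n::finite) mat \<Rightarrow> 'n mat \<Rightarrow> 'n mat" (infixl "\<otimes>\<^sub>m" 70) where
  "A \<otimes>\<^sub>m B = (\<lambda>i j. Max (range (\<lambda>k. A i k * B k j)))"

definition mone :: "('n::finite) mat" where
  "mone = (\<lambda>i j. if i = j then 1 else 0)"

primrec mpow :: "('n::finite) mat \<Rightarrow> nat \<Rightarrow> 'n mat" where
  "mpow A 0 = mone"
| "mpow A (Suc k) = mpow A k \<otimes>\<^sub>m A"

definition circuits :: "('n::finite) mat \<Rightarrow> 'n list set" where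
  "circuits A = {xs. xs \<noteq> [] \<and> distinct xs \<and>
     (\<forall>k < length xs. 0 < A (xs ! k) (xs ! ((k + 1) mod length xs)))}"

definition cgm :: "('n::finite) mat \<Rightarrow> 'n list \<Rightarrow> real" where
  "cgm A xs = root (length xs) (\<Prod>k<length xs. A (xs ! k) (xs ! ((k + 1) mod length xs)))"

text \<open>Maximum circuit geometric mean (0 if the digraph has no circuit).\<close>
definition mcgm :: "('n::finite) mat \<Rightarrow> real" where
  "mcgm A = Max (insert 0 (cgm A ` circuits A))"

text \<open>A_omega = A_{w_p} \<otimes> ... \<otimes> A_{w_1} for the word w = [w_1, ..., w_p].\<close>
primrec word_mat :: "(nat \<Rightarrow> ('n::finite) mat) \<Rightarrow> nat list \<Rightarrow> 'n mat" where
  "word_mat A [] = mone"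
| "word_mat A (x # xs) = word_mat A xs \<otimes>\<^sub>m A x"

definition mprod_list :: "('n::finite) mat list \<Rightarrow> 'n mat" where
  "mprod_list Ms = foldl (\<otimes>\<^sub>m) mone Ms"

definition mconv :: "(nat \<Rightarrow> ('n::finite) mat) \<Rightarrow> 'n mat \<Rightarrow> bool" where
  "mconv M L \<longleftrightarrow> (\<forall>a b. (\<lambda>k. M k a b) \<longlonglongrightarrow> L a b)"

end

theory Submission
  imports Defs
begin

lemma entry_ge: "X a k * Y k b \<le> (X \<otimes>\<^sub>m Y) a b"
  unfolding mmult_def by (rule Max_ge) auto

lemma entry_ex: "\<exists>k. (X \<otimes>\<^sub>m Y) a b = X a k * Y k b"
proof -
  have "Max (range (\<lambda>k. X a k * Y k b)) \<in> range (\<lambda>k. X a k * Y k b)"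
    by (rule Max_in) auto
  then obtain k where "Max (range (\<lambda>k. X a k * Y k b)) = X a k * Y k b" by blast
  then show ?thesis unfolding mmult_def by blast
qed

lemma entry_le: "(\<And>k. X a k * Y k b \<le> c) \<Longrightarrow> (X \<otimes>\<^sub>m Y) a b \<le> c"
  using entry_ex by metis

lemma nonneg_mult: "nonneg_mat X \<Longrightarrow> nonneg_mat Y \<Longrightarrow> nonneg_mat (X \<otimes>\<^sub>m Y)"
  unfolding nonneg_mat_def by (meson entry_ge mult_nonneg_nonneg order_trans)

lemma nonneg_mone: "nonneg_mat mone"
  unfolding nonneg_mat_def mone_def by auto

lemma nonneg_mpow: "nonneg_mat X \<Longrightarrow> nonneg_mat (mpow X m)"
  by (induction m) (auto intro: nonneg_mult nonneg_mone)

lemma mmult_assoc: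
  assumes X: "nonneg_mat X" and Z: "nonneg_mat Z"
  shows "(X \<otimes>\<^sub>m Y) \<otimes>\<^sub>m Z = X \<otimes>\<^sub>m (Y \<otimes>\<^sub>m Z)"
proof (intro ext antisym)
  fix a b
  show "((X \<otimes>\<^sub>m Y) \<otimes>\<^sub>m Z) a b \<le> (X \<otimes>\<^sub>m (Y \<otimes>\<^sub>m Z)) a b"
  proof (rule entry_le)
    fix k
    obtain l where l: "(X \<otimes>\<^sub>m Y) a k = X a l * Y l k" using entry_ex by metis
    have "X a l * Y l k * Z k b = X a l * (Y l k * Z k b)" by simp
    also have "\<dots> \<le> X a l * (Y \<otimes>\<^sub>m Z) l b"
      using X entry_ge unfolding nonneg_mat_def by (metis mult_left_mono)
    also have "\<dots> \<le> (X \<otimes>\<^sub>m (Y \<otimes>\<^sub>m Z)) a b" by (rule entry_ge)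
    finally show "(X \<otimes>\<^sub>m Y) a k * Z k b \<le> (X \<otimes>\<^sub>m (Y \<otimes>\<^sub>m Z)) a b" using l by simp
  qed
  show "(X \<otimes>\<^sub>m (Y \<otimes>\<^sub>m Z)) a b \<le> ((X \<otimes>\<^sub>m Y) \<otimes>\<^sub>m Z) a b"
  proof (rule entry_le)
    fix k
    obtain l where l: "(Y \<otimes>\<^sub>m Z) k b = Y k l * Z l b" using entry_ex by metis
    have "X a k * (Y k l * Z l b) = X a k * Y k l * Z l b" by simp
    also have "\<dots> \<le> (X \<otimes>\<^sub>m Y) a l * Z l b"
      using Z entry_ge unfolding nonneg_mat_def by (metis mult_right_mono)
    also have "\<dots> \<le> ((X \<otimes>\<^sub>m Y) \<otimes>\<^sub>m Z) a b" by (rule entry_ge)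
    finally show "X a k * (Y \<otimes>\<^sub>m Z) k b \<le> ((X \<otimes>\<^sub>m Y) \<otimes>\<^sub>m Z) a b" using l by simp
  qed
qed

lemma mone_left: assumes "nonneg_mat X" shows "mone \<otimes>\<^sub>m X = X"
proof (intro ext antisym)
  fix a b
  show "(mone \<otimes>\<^sub>m X) a b \<le> X a b"
    by (rule entry_le) (use assms in \<open>auto simp: mone_def nonneg_mat_def\<close>)
  show "X a b \<le> (mone \<otimes>\<^sub>m X) a b" using entry_ge[of mone a a X b] by (simp add: mone_def)
qed

lemma mone_right: assumes "nonneg_mat X" shows "X \<otimes>\<^sub>m mone = X"
proof (intro ext antisym)
  fix a b
  show "(X \<otimes>\<^sub>m mone) a b \<le> X a b"
    by (rule entry_le) (use assms in \<open>auto simp: mone_def nonneg_mat_def\<close>)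
  show "X a b \<le> (X \<otimes>\<^sub>m mone) a b" using entry_ge[of X a b mone b] by (simp add: mone_def)
qed

lemma mpow_one: "nonneg_mat X \<Longrightarrow> mpow X 1 = X"
  by (simp add: mone_left)

lemma mpow_add: assumes "nonneg_mat X" shows "mpow X (m + k) = mpow X m \<otimes>\<^sub>m mpow X k"
proof (induction k)
  case 0 then show ?case using mone_right[OF nonneg_mpow[OF assms]] by simp
next
  case (Suc k) then show ?case using mmult_assoc[OF nonneg_mpow[OF assms] assms] by simp
qed

lemma mpow_mult: assumes "nonneg_mat X" shows "mpow X (m * c) = mpow (mpow X m) c"
proof (induction c)
  case 0 then show ?case by simp
next
  case (Suc c)
  have "mpow X (m * Suc c) = mpow X (m * c + m)" by (simp add: algebra_simps)
  then show ?case using Suc mpow_add[OF assms] by simp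
qed

definition wt :: "('n::finite) mat \<Rightarrow> (nat \<Rightarrow> 'n) \<Rightarrow> nat \<Rightarrow> real" where
  "wt B f m = (\<Prod>k<m. B (f k) (f (Suc k)))"

lemma wt_nonneg: "nonneg_mat B \<Longrightarrow> 0 \<le> wt B f m"
  unfolding wt_def nonneg_mat_def by (simp add: prod_nonneg)

lemma wt_le_mpow:
  assumes "nonneg_mat B" shows "wt B f m \<le> mpow B m (f 0) (f m)"
proof (induction m)
  case 0 then show ?case by (simp add: wt_def mone_def)
next
  case (Suc m)
  have "wt B f (Suc m) = wt B f m * B (f m) (f (Suc m))" by (simp add: wt_def)
  also have "\<dots> \<le> mpow B m (f 0) (f m) * B (f m) (f (Suc m))"
    using Suc assms unfolding nonneg_mat_def by (simp add: mult_right_mono)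
  also have "\<dots> \<le> mpow B (Suc m) (f 0) (f (Suc m))" by (simp add: entry_ge)
  finally show ?case .
qed

lemma mpow_walk:
  "mpow B m a b = 0 \<or> (\<exists>f. f 0 = a \<and> f m = b \<and> mpow B m a b = wt B f m)"
proof (induction m arbitrary: b)
  case 0 then show ?case
  proof (cases "a = b")
    case True then show ?thesis by (intro disjI2 exI[of _ "\<lambda>_. a"]) (simp add: mone_def wt_def)
  next
    case False then show ?thesis by (simp add: mone_def)
  qed
next
  case (Suc m)
  obtain d where d: "mpow B (Suc m) a b = mpow B m a d * B d b"
    using entry_ex[of "mpow B m" B a b] by auto
  from Suc.IH[of d] show ?case
  proof
    assume "mpow B m a d = 0" then show ?case using d by simp
  next
    assume "\<exists>f. f 0 = a \<and> f m = d \<and> mpow B m a d = wt B f m"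
    then obtain f where f: "f 0 = a" "f m = d" "mpow B m a d = wt B f m" by blast
    define g where "g = f(Suc m := b)"
    have "wt B g m = wt B f m" unfolding wt_def g_def by (intro prod.cong) auto
    then have w: "wt B g (Suc m) = wt B f m * B d b"
      by (simp add: wt_def g_def f)
    have g0: "g 0 = a" "g (Suc m) = b" using f by (auto simp: g_def)
    have "mpow B (Suc m) a b = wt B g (Suc m)" using w d f(3) by simp
    then show ?case using g0 by blast
  qed
qed

lemma finite_circuits: "finite (circuits (B::('n::finite) mat))"
proof -
  have "circuits B \<subseteq> {xs. set xs \<subseteq> UNIV \<and> length xs \<le> CARD('n)}"
  proof
    fix xs assume "xs \<in> circuits B"
    then have "distinct xs" by (simp add: circuits_def)
    then have "length xs = card (set xs)" by (simp add: distinct_card)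
    also have "\<dots> \<le> CARD('n)" by (rule card_mono) auto
    finally show "xs \<in> {xs. set xs \<subseteq> UNIV \<and> length xs \<le> CARD('n)}" by simp
  qed
  then show ?thesis by (rule finite_subset) (rule finite_lists_length_le, simp)
qed

lemma cgm_le_mcgm: "xs \<in> circuits B \<Longrightarrow> cgm B xs \<le> mcgm B"
  unfolding mcgm_def by (rule Max_ge) (auto simp: finite_circuits)

lemma mcgm_nonneg: "0 \<le> mcgm B"
  unfolding mcgm_def by (rule Max_ge) (auto simp: finite_circuits)

lemma cyc_prod_nonneg: "nonneg_mat B \<Longrightarrow>
   0 \<le> (\<Prod>k<length xs. B (xs ! k) (xs ! ((k + 1) mod length xs)))"
  unfolding nonneg_mat_def by (simp add: prod_nonneg)

lemma cycle_bound:
  assumes B: "nonneg_mat B" and xs: "xs \<in> circuits B"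
  shows "(\<Prod>k<length xs. B (xs ! k) (xs ! ((k + 1) mod length xs))) \<le> mcgm B ^ length xs"
proof -
  let ?P = "(\<Prod>k<length xs. B (xs ! k) (xs ! ((k + 1) mod length xs)))"
  have l: "0 < length xs" using xs unfolding circuits_def by auto
  have "?P = root (length xs) ?P ^ length xs"
    using l cyc_prod_nonneg[OF B, of xs] by (simp only: real_root_pow_pos2)
  also have "\<dots> \<le> mcgm B ^ length xs"
    using cgm_le_mcgm[OF xs] cyc_prod_nonneg[OF B, of xs]
    by (intro power_mono) (auto simp: cgm_def real_root_ge_zero)
  finally show ?thesis .
qed

lemma walk_bound:
  fixes B :: "('n::finite) mat"
  assumes B: "nonneg_mat B" and M: "\<forall>a b. B a b \<le> M" "1 \<le> M"
  shows "\<exists>r<CARD('n). r \<le> m \<and> wt B f m \<le> M ^ r * mcgm B ^ (m - r)"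
proof (induction m arbitrary: f rule: less_induct)
  case (less m)
  let ?n = "CARD('n)"
  let ?g = "mcgm B"
  have g0: "0 \<le> ?g" by (rule mcgm_nonneg)
  show ?case
  proof (cases "m < ?n")
    case True
    have "wt B f m \<le> (\<Prod>k<m. M)" unfolding wt_def
      by (rule prod_mono) (use B M in \<open>auto simp: nonneg_mat_def\<close>)
    then have "wt B f m \<le> M ^ m * ?g ^ (m - m)" by simp
    then show ?thesis using True by blast
  next
    case False
    have "\<not> inj_on f {..?n}"
    proof
      assume "inj_on f {..?n}"
      then have "card (f ` {..?n}) = Suc ?n" by (simp add: card_image)
      moreover have "card (f ` {..?n}) \<le> ?n" by (rule card_mono) auto
      ultimately show False by simp
    qed
    then obtain i0 j1 where ij: "i0 \<le> ?n" "j1 \<le> ?n" "i0 \<noteq> j1" "f i0 = f j1"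
      unfolding inj_on_def by auto
    have ex: "\<exists>j. j \<le> ?n \<and> (\<exists>i<j. f i = f j)"
    proof (cases "i0 < j1")
      case True then show ?thesis using ij by blast
    next
      case False then have "j1 < i0" using ij(3) by simp
      then show ?thesis using ij by metis
    qed
    obtain j where jP: "j \<le> ?n" "\<exists>i<j. f i = f j"
      and jmin: "\<forall>j'<j. \<not> (j' \<le> ?n \<and> (\<exists>i<j'. f i = f j'))"
      using ex exists_least_iff[of "\<lambda>j. j \<le> ?n \<and> (\<exists>i<j. f i = f j)"] by blast
    then obtain i where i: "i < j" "f i = f j" by blast
    have inj: "inj_on f {i..<j}"
    proof (rule inj_onI)
      fix x y assume xy: "x \<in> {i..<j}" "y \<in> {i..<j}" "f x = f y"
      show "x = y"
      proof (rule ccontr)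
        assume "x \<noteq> y"
        then consider "x < y" | "y < x" by linarith
        then show False
        proof cases
          case 1
          have "y < j" "y \<le> ?n" using xy jP(1) by auto
          then show False using jmin 1 xy(3) by blast
        next
          case 2
          have "x < j" "x \<le> ?n" using xy jP(1) by auto
          then show False using jmin 2 xy(3) by metis
        qed
      qed
    qed
    define l where "l = j - i"
    have l0: "0 < l" and jl: "j = i + l" using i by (auto simp: l_def)
    have lm: "l \<le> m" "j \<le> m" using jP(1) False l_def by auto
    define xs where "xs = map f [i..<j]"
    have lxs: "length xs = l" by (simp add: xs_def l_def)
    have nth: "\<And>k. k < l \<Longrightarrow> xs ! k = f (i + k)" by (simp add: xs_def l_def)
    have nxt: "\<And>k. k < l \<Longrightarrow> xs ! ((k + 1) mod l) = f (Suc (i + k))"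
    proof -
      fix k assume k: "k < l"
      show "xs ! ((k + 1) mod l) = f (Suc (i + k))"
      proof (cases "k + 1 < l")
        case True then show ?thesis using nth by simp
      next
        case False then have "k + 1 = l" using k by simp
        then have e: "Suc (i + k) = j" using jl by simp
        show ?thesis using nth[of 0] l0 i(2) e \<open>k + 1 = l\<close> by simp
      qed
    qed
    define h where "h = (\<lambda>k. B (f k) (f (Suc k)))"
    define cyc where "cyc = (\<Prod>k<l. h (k + i))"
    have cyc_eq: "cyc = (\<Prod>k\<in>{i..<j}. h k)"
      using prod.shift_bounds_nat_ivl[of h 0 i l] by (simp add: cyc_def jl atLeast0LessThan add.commute)
    have cyc0: "0 \<le> cyc" using B unfolding cyc_def h_def nonneg_mat_def by (simp add: prod_nonneg)
    have cyc_le: "cyc \<le> ?g ^ l"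
    proof (cases "\<forall>k<l. 0 < h (k + i)")
      case True
      have "xs \<in> circuits B"
        unfolding circuits_def
      proof (intro CollectI conjI allI impI)
        show "xs \<noteq> []" using lxs l0 by auto
        show "distinct xs" unfolding xs_def using inj by (simp add: distinct_map)
        fix k assume "k < length xs"
        then have "k < l" using lxs by simp
        then show "0 < B (xs ! k) (xs ! ((k + 1) mod length xs))"
        proof -
          have "0 < h (k + i)" using True \<open>k < l\<close> by blast
          moreover have "k + i = i + k" by simp
          ultimately show ?thesis using nth[of k] nxt[of k] lxs \<open>k < l\<close> by (simp add: h_def)
        qed
      qed
      moreover have "(\<Prod>k<length xs. B (xs ! k) (xs ! ((k + 1) mod length xs))) = cyc"
        unfolding cyc_def lxs
      proof (rule prod.cong)
        fix k assume "k \<in> {..<l}"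
        then have "k < l" by simp
        then show "B (xs ! k) (xs ! ((k + 1) mod l)) = h (k + i)"
          using nth[of k] nxt[of k] by (simp only: h_def add.commute[of i k])
      qed simp
      ultimately show ?thesis using cycle_bound[OF B] lxs by metis
    next
      case False
      then obtain k where k: "k < l" "\<not> 0 < h (k + i)" by blast
      then have "h (k + i) = 0" using B unfolding h_def nonneg_mat_def by (metis less_eq_real_def)
      then have "cyc = 0" unfolding cyc_def using k by (auto intro!: prod_zero)
      then show ?thesis using g0 by simp
    qed
    define g where "g = (\<lambda>k. if k \<le> i then f k else f (k + l))"
    have gge: "\<And>k. i \<le> k \<Longrightarrow> g k = f (k + l)"
      using i jl by (auto simp: g_def)
    obtain r where r: "r < ?n" "r \<le> m - l" "wt B g (m - l) \<le> M ^ r * ?g ^ (m - l - r)"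
      using less.IH[of "m - l" g] l0 lm by auto
    have split_f: "wt B f m = (\<Prod>k\<in>{0..<i}. h k) * cyc * (\<Prod>k\<in>{j..<m}. h k)"
      unfolding wt_def cyc_eq h_def[symmetric]
      using prod.atLeastLessThan_concat[of 0 i j h] prod.atLeastLessThan_concat[of 0 j m h] i lm
      by (simp add: atLeast0LessThan)
    have p1: "(\<Prod>k\<in>{0..<i}. B (g k) (g (Suc k))) = (\<Prod>k\<in>{0..<i}. h k)"
      by (rule prod.cong) (auto simp: g_def h_def)
    have "(\<Prod>k\<in>{i..<m-l}. B (g k) (g (Suc k))) = (\<Prod>k\<in>{i..<m-l}. h (k + l))"
      by (rule prod.cong) (auto simp: gge h_def)
    also have "\<dots> = (\<Prod>k\<in>{j..<m}. h k)"
      using prod.shift_bounds_nat_ivl[of h i l "m - l"] lm jl by simp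
    finally have p2: "(\<Prod>k\<in>{i..<m-l}. B (g k) (g (Suc k))) = (\<Prod>k\<in>{j..<m}. h k)" .
    have split_g: "wt B g (m - l) = (\<Prod>k\<in>{0..<i}. h k) * (\<Prod>k\<in>{j..<m}. h k)"
      unfolding wt_def
      using prod.atLeastLessThan_concat[of 0 i "m - l" "\<lambda>k. B (g k) (g (Suc k))"] p1 p2 i lm jl
      by (simp add: atLeast0LessThan)
    have wf: "wt B f m = cyc * wt B g (m - l)" using split_f split_g by simp
    have "wt B f m \<le> ?g ^ l * (M ^ r * ?g ^ (m - l - r))"
      unfolding wf
      by (rule mult_mono[OF cyc_le r(3)]) (use g0 wt_nonneg[OF B] in auto)
    also have "\<dots> = M ^ r * ?g ^ (m - r)"
    proof -
      have "l + (m - l - r) = m - r" using r(2) lm by simp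
      then show ?thesis by (metis mult.left_commute power_add)
    qed
    finally show ?thesis using r by auto
  qed
qed

lemma exists_bound: "\<exists>M. 1 \<le> M \<and> (\<forall>a b. (B::('n::finite) mat) a b \<le> M)"
proof -
  define M where "M = max 1 (Max (range (\<lambda>p. B (fst p) (snd p))))"
  have "\<forall>a b. B a b \<le> M"
  proof (intro allI)
    fix a b
    have "B a b \<le> Max (range (\<lambda>p. B (fst p) (snd p)))"
      by (rule Max_ge) (auto intro: image_eqI[of _ _ "(a, b)"])
    then show "B a b \<le> M" unfolding M_def by simp
  qed
  then show ?thesis unfolding M_def by (intro exI[of _ M]) (auto simp: M_def)
qed

lemma mpow_bound:
  fixes B :: "('n::finite) mat"
  assumes B: "nonneg_mat B" and M: "\<forall>a b. B a b \<le> M" "1 \<le> M"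
  shows "\<exists>r<CARD('n). r \<le> m \<and> mpow B m a b \<le> M ^ r * mcgm B ^ (m - r)"
proof -
  have g0: "0 \<le> mcgm B" by (rule mcgm_nonneg)
  from mpow_walk[of B m a b] show ?thesis
  proof
    assume "mpow B m a b = 0"
    moreover have "0 \<le> M ^ 0 * mcgm B ^ (m - 0)" using g0 by simp
    ultimately show ?thesis by (metis le0 zero_less_card_finite)
  next
    assume "\<exists>f. f 0 = a \<and> f m = b \<and> mpow B m a b = wt B f m"
    then obtain f where "mpow B m a b = wt B f m" by blast
    then show ?thesis using walk_bound[OF B M, of m f] by auto
  qed
qed

lemma mpow_nonneg_entry: "nonneg_mat B \<Longrightarrow> 0 \<le> mpow B m a b"
  using nonneg_mpow unfolding nonneg_mat_def by blast

lemma mpow_bounded: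
  fixes B :: "('n::finite) mat"
  assumes B: "nonneg_mat B" and M: "\<forall>a b. B a b \<le> M" "1 \<le> M" and g: "mcgm B \<le> 1"
  shows "mpow B m a b \<le> M ^ CARD('n)"
proof -
  obtain r where r: "r < CARD('n)" "mpow B m a b \<le> M ^ r * mcgm B ^ (m - r)"
    using mpow_bound[OF B M] by blast
  have "mcgm B ^ (m - r) \<le> 1" using power_le_one[OF mcgm_nonneg g] by blast
  then have "M ^ r * mcgm B ^ (m - r) \<le> M ^ r * 1"
    using M by (intro mult_left_mono) auto
  also have "\<dots> \<le> M ^ CARD('n)" using M r by (simp add: power_increasing)
  finally show ?thesis using r by simp
qed

lemma mpow_decay:
  fixes B :: "('n::finite) mat"
  assumes B: "nonneg_mat B" and g: "mcgm B < 1"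
  shows "(\<lambda>m. mpow B m a b) \<longlonglongrightarrow> 0"
proof -
  obtain M where M: "1 \<le> M" "\<forall>a b. B a b \<le> M" using exists_bound by blast
  let ?n = "CARD('n)"
  let ?g = "mcgm B"
  have g0: "0 \<le> ?g" by (rule mcgm_nonneg)
  have le: "mpow B (m + ?n) a b \<le> M ^ ?n * ?g ^ m" for m
  proof -
    obtain r where r: "r < ?n" "mpow B (m + ?n) a b \<le> M ^ r * ?g ^ (m + ?n - r)"
      using mpow_bound[OF B M(2) M(1)] by blast
    have "?g ^ (m + ?n - r) \<le> ?g ^ m"
      using g g0 r by (intro power_decreasing) auto
    moreover have "M ^ r \<le> M ^ ?n" using M r by (simp add: power_increasing)
    ultimately have "M ^ r * ?g ^ (m + ?n - r) \<le> M ^ ?n * ?g ^ m"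
      using M g0 by (intro mult_mono) auto
    then show ?thesis using r by simp
  qed
  have "(\<lambda>m. M ^ ?n * ?g ^ m) \<longlonglongrightarrow> 0"
    using g g0 by (intro tendsto_mult_right_zero LIMSEQ_power_zero) simp
  moreover have ev1: "eventually (\<lambda>m. 0 \<le> mpow B (m + ?n) a b) sequentially"
    by (rule always_eventually) (intro allI mpow_nonneg_entry[OF B])
  moreover have ev2: "eventually (\<lambda>m. mpow B (m + ?n) a b \<le> M ^ ?n * ?g ^ m) sequentially"
    by (rule always_eventually) (intro allI le)
  ultimately have "(\<lambda>m. mpow B (m + ?n) a b) \<longlonglongrightarrow> 0"
    using tendsto_sandwich[OF ev1 ev2 tendsto_const] by blast
  then show ?thesis by (rule LIMSEQ_offset)
qed

lemma conv_crit:
  fixes v e :: "nat \<Rightarrow> real"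
  assumes v0: "\<And>k. 0 \<le> v k" and vb: "\<And>k. v k \<le> Bd" and e: "e \<longlonglongrightarrow> 0"
    and mono: "\<And>k k'. e k < v k \<Longrightarrow> k \<le> k' \<Longrightarrow> v k \<le> v k'"
  shows "convergent v"
proof (cases "\<exists>k. e k < v k")
  case False
  then have "v \<longlonglongrightarrow> 0"
    by (intro tendsto_sandwich[OF _ _ tendsto_const e]) (auto simp: v0 not_less)
  then show ?thesis by (auto simp: convergent_def)
next
  case True
  define G where "G = {k. e k < v k}"
  have Gne: "v ` G \<noteq> {}" using True by (auto simp: G_def)
  have bdd: "bdd_above (v ` G)" using vb by (intro bdd_aboveI[of _ Bd]) auto
  define L where "L = Sup (v ` G)"
  have vL: "\<And>k. k \<in> G \<Longrightarrow> v k \<le> L" unfolding L_def using bdd by (auto intro: cSup_upper)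
  have L0: "0 \<le> L" using True vL v0 G_def by (meson mem_Collect_eq order_trans)
  have "v \<longlonglongrightarrow> L"
  proof (rule LIMSEQ_I)
    fix r :: real assume r: "0 < r"
    have "L - r < L" using r by simp
    then obtain g where g: "g \<in> G" "L - r < v g"
      using less_cSup_iff[OF Gne bdd] unfolding L_def by auto
    obtain K where K: "\<And>k. k \<ge> K \<Longrightarrow> norm (e k - 0) < r" using LIMSEQ_D[OF e r] by blast
    show "\<exists>no. \<forall>n\<ge>no. norm (v n - L) < r"
    proof (intro exI allI impI)
      fix n assume n: "max g K \<le> n"
      have lo: "v g \<le> v n" using mono[of g n] g n by (auto simp: G_def)
      have hi: "v n < L + r"
      proof (cases "n \<in> G")
        case True then show ?thesis using vL r by fastforce
      next
        case False then have "v n \<le> e n" by (auto simp: G_def)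
        moreover have "e n < r" using K[of n] n by auto
        ultimately show ?thesis using L0 by simp
      qed
      show "norm (v n - L) < r" using lo hi g by auto
    qed
  qed
  then show ?thesis by (auto simp: convergent_def)
qed

definition crit :: "('n::finite) mat \<Rightarrow> 'n \<Rightarrow> bool" where
  "crit A c \<longleftrightarrow> (\<exists>xs\<in>circuits A. c \<in> set xs \<and> cgm A xs = 1)"

definition redm :: "('n::finite) mat \<Rightarrow> 'n mat" where
  "redm A = (\<lambda>a b. if crit A a \<or> crit A b then 0 else A a b)"

lemma nonneg_redm: "nonneg_mat A \<Longrightarrow> nonneg_mat (redm A)"
  unfolding nonneg_mat_def redm_def by auto

lemma redm_mcgm:
  assumes A: "nonneg_mat A" and mu: "mcgm A \<le> 1"
  shows "mcgm (redm A) < 1"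
proof -
  have "cgm (redm A) xs < 1" if xs: "xs \<in> circuits (redm A)" for xs
  proof -
    let ?l = "length xs"
    have pos: "\<And>k. k < ?l \<Longrightarrow> 0 < redm A (xs ! k) (xs ! ((k + 1) mod ?l))"
      using xs unfolding circuits_def by auto
    have nc: "\<And>k. k < ?l \<Longrightarrow> \<not> crit A (xs ! k) \<and> \<not> crit A (xs ! ((k + 1) mod ?l))
                  \<and> redm A (xs ! k) (xs ! ((k + 1) mod ?l)) = A (xs ! k) (xs ! ((k + 1) mod ?l))"
    proof -
      fix k assume "k < ?l"
      from pos[OF this] show "\<not> crit A (xs ! k) \<and> \<not> crit A (xs ! ((k + 1) mod ?l))
                  \<and> redm A (xs ! k) (xs ! ((k + 1) mod ?l)) = A (xs ! k) (xs ! ((k + 1) mod ?l))"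
        unfolding redm_def by (auto split: if_splits)
    qed
    have xsA: "xs \<in> circuits A"
      using xs pos nc unfolding circuits_def by auto
    have eq: "cgm (redm A) xs = cgm A xs"
    proof -
      have "(\<Prod>k<?l. redm A (xs ! k) (xs ! ((k + 1) mod ?l))) = (\<Prod>k<?l. A (xs ! k) (xs ! ((k + 1) mod ?l)))"
        by (rule prod.cong) (use nc in auto)
      then show ?thesis unfolding cgm_def by simp
    qed
    have l0: "0 < ?l" using xs unfolding circuits_def by auto
    have "\<not> crit A (xs ! 0)" using nc[OF l0] by simp
    moreover have "xs ! 0 \<in> set xs" using l0 by simp
    ultimately have "cgm A xs \<noteq> 1" using xsA unfolding crit_def by blast
    moreover have "cgm A xs \<le> 1" using cgm_le_mcgm[OF xsA] mu by simp
    ultimately show ?thesis using eq by simp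
  qed
  then show ?thesis unfolding mcgm_def by (simp add: finite_circuits)
qed

lemma crit_cycle:
  fixes A :: "('n::finite) mat"
  assumes A: "nonneg_mat A" and c: "crit A c"
  shows "\<exists>l. 0 < l \<and> l \<le> CARD('n) \<and> 1 \<le> mpow A l c c"
proof -
  obtain xs where xs: "xs \<in> circuits A" "c \<in> set xs" "cgm A xs = 1"
    using c unfolding crit_def by blast
  define l where "l = length xs"
  have l0: "0 < l" using xs unfolding circuits_def l_def by auto
  have ln: "l \<le> CARD('n)"
  proof -
    have "distinct xs" using xs unfolding circuits_def by auto
    then have "l = card (set xs)" by (simp add: distinct_card l_def)
    also have "\<dots> \<le> CARD('n)" by (rule card_mono) auto
    finally show ?thesis .
  qed
  define P where "P = (\<Prod>k<l. A (xs ! k) (xs ! ((k + 1) mod l)))"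
  have P0: "0 \<le> P" unfolding P_def l_def by (rule cyc_prod_nonneg[OF A])
  have P1: "P = 1"
  proof -
    have "P = root l P ^ l" using l0 P0 by (simp only: real_root_pow_pos2)
    also have "root l P = 1" using xs(3) unfolding cgm_def P_def l_def by simp
    finally show ?thesis by simp
  qed
  obtain s where s: "s < l" "xs ! s = c" using xs(2) unfolding l_def by (auto simp: in_set_conv_nth)
  define f where "f = (\<lambda>k. xs ! (k mod l))"
  define h where "h = (\<lambda>k. A (f k) (f (Suc k)))"
  have "wt A f l = P" unfolding wt_def P_def
    by (rule prod.cong) (auto simp: f_def)
  moreover have "wt A f l = wt A f s * (\<Prod>k\<in>{s..<l}. h k)"
    unfolding wt_def h_def[symmetric]
    using prod.atLeastLessThan_concat[of 0 s l h] s by (simp add: atLeast0LessThan)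
  moreover have "(\<Prod>k\<in>{s..<l}. h k) = wt A (\<lambda>k. f (k + s)) (l - s)"
    unfolding wt_def h_def using prod.shift_bounds_nat_ivl[of "\<lambda>k. A (f k) (f (Suc k))" 0 s "l - s"] s
    by (simp add: atLeast0LessThan)
  ultimately have Pw: "P = wt A f s * wt A (\<lambda>k. f (k + s)) (l - s)" by simp
  have w1: "wt A f s \<le> mpow A s (xs ! 0) c"
    using wt_le_mpow[OF A, of f s] s l0 by (simp add: f_def)
  have w2: "wt A (\<lambda>k. f (k + s)) (l - s) \<le> mpow A (l - s) c (xs ! 0)"
    using wt_le_mpow[OF A, of "\<lambda>k. f (k + s)" "l - s"] s l0 by (simp add: f_def)
  have "1 = wt A (\<lambda>k. f (k + s)) (l - s) * wt A f s" using Pw P1 by (metis mult.commute)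
  also have "\<dots> \<le> mpow A (l - s) c (xs ! 0) * mpow A s (xs ! 0) c"
    using w1 w2 by (intro mult_mono) (auto simp: wt_nonneg[OF A] mpow_nonneg_entry[OF A])
  also have "\<dots> \<le> (mpow A (l - s) \<otimes>\<^sub>m mpow A s) c c" by (rule entry_ge)
  also have "\<dots> = mpow A l c c" using mpow_add[OF A, of "l - s" s] s by simp
  finally show ?thesis using l0 ln by blast
qed

lemma pow_cycle:
  assumes A: "nonneg_mat A" and c: "1 \<le> mpow A l c c"
  shows "1 \<le> mpow A (l * r) c c"
proof (induction r)
  case 0 then show ?case by (simp add: mone_def)
next
  case (Suc r)
  have "1 * 1 \<le> mpow A (l * r) c c * mpow A l c c"
    by (rule mult_mono) (use Suc c in auto)
  then have "1 \<le> mpow A (l * r) c c * mpow A l c c" by simp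
  also have "\<dots> \<le> (mpow A (l * r) \<otimes>\<^sub>m mpow A l) c c" by (rule entry_ge)
  also have "\<dots> = mpow A (l * Suc r) c c" using mpow_add[OF A, of "l * r" l] by (simp add: add.commute)
  finally show ?case .
qed

lemma split_crit:
  assumes A: "nonneg_mat A"
  shows "mpow A m a b \<le> mpow (redm A) m a b \<or>
    (\<exists>c t. crit A c \<and> t \<le> m \<and> mpow A m a b \<le> mpow A t a c * mpow A (m - t) c b)"
proof (induction m arbitrary: b)
  case 0 then show ?case by simp
next
  case (Suc m)
  obtain d where d: "mpow A (Suc m) a b = mpow A m a d * A d b"
    using entry_ex[of "mpow A m" A a b] by auto
  have Adb: "0 \<le> A d b" using A unfolding nonneg_mat_def by auto
  from Suc.IH[of d] show ?case
  proof
    assume h: "mpow A m a d \<le> mpow (redm A) m a d"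
    show ?case
    proof (cases "crit A b")
      case True
      have "mpow A (Suc m) a b \<le> mpow A (Suc m) a b * mpow A (Suc m - Suc m) b b"
        by (simp add: mone_def)
      then show ?thesis using True by blast
    next
      case nb: False
      show ?thesis
      proof (cases "crit A d")
        case True
        have e: "mpow A (Suc m) a b = mpow A m a d * mpow A (Suc m - m) d b"
          using d mpow_one[OF A] by simp
        show ?thesis
          by (intro disjI2 exI[of _ d] exI[of _ m] conjI True) (use e in simp_all)
      next
        case False
        have "mpow A (Suc m) a b \<le> mpow (redm A) m a d * redm A d b"
          using d h Adb nb False by (simp add: redm_def mult_right_mono)
        also have "\<dots> \<le> mpow (redm A) (Suc m) a b" by (simp add: entry_ge)
        finally show ?thesis by blast
      qed
    qed
  next
    assume "\<exists>c t. crit A c \<and> t \<le> m \<and> mpow A m a d \<le> mpow A t a c * mpow A (m - t) c d"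
    then obtain c t where ct: "crit A c" "t \<le> m" "mpow A m a d \<le> mpow A t a c * mpow A (m - t) c d"
      by blast
    have "mpow A (Suc m) a b \<le> mpow A t a c * mpow A (m - t) c d * A d b"
      using d ct(3) Adb by (simp add: mult_right_mono)
    also have "\<dots> = mpow A t a c * (mpow A (m - t) c d * A d b)" by simp
    also have "\<dots> \<le> mpow A t a c * mpow A (Suc (m - t)) c b"
      using entry_ge[of "mpow A (m - t)" c d A b] mpow_nonneg_entry[OF A]
      by (simp add: mult_left_mono)
    also have "Suc (m - t) = Suc m - t" using ct(2) by simp
    finally have e: "mpow A (Suc m) a b \<le> mpow A t a c * mpow A (Suc m - t) c b" .
    show ?thesis
      by (intro disjI2 exI[of _ c] exI[of _ t] conjI ct(1) e) (use ct(2) in simp)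
  qed
qed

lemma conv_single:
  fixes A :: "('n::finite) mat"
  assumes A: "nonneg_mat A" and mu: "mcgm A \<le> 1" and q: "0 < q"
    and dv: "\<forall>l. 0 < l \<longrightarrow> l \<le> CARD('n) \<longrightarrow> l dvd q"
  shows "convergent (\<lambda>k. mpow A (k * q + j) a b)"
proof -
  obtain M where M: "1 \<le> M" "\<forall>a b. A a b \<le> M" using exists_bound by blast
  define v where "v = (\<lambda>k. mpow A (k * q + j) a b)"
  define e where "e = (\<lambda>k. mpow (redm A) (k * q + j) a b)"
  have sm: "strict_mono (\<lambda>k::nat. k * q + j)"
    by (rule strict_monoI) (use q in simp)
  have "((\<lambda>m. mpow (redm A) m a b) \<circ> (\<lambda>k. k * q + j)) \<longlonglongrightarrow> 0"
    by (rule LIMSEQ_subseq_LIMSEQ[OF mpow_decay[OF nonneg_redm[OF A] redm_mcgm[OF A mu]] sm])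
  then have e0: "e \<longlonglongrightarrow> 0" by (simp add: e_def o_def)
  have mono: "v k \<le> v k'" if ev: "e k < v k" and kk: "k \<le> k'" for k k'
  proof -
    define m where "m = k * q + j"
    from split_crit[OF A, of m a b] ev
    obtain c t where ct: "crit A c" "t \<le> m" "v k \<le> mpow A t a c * mpow A (m - t) c b"
      unfolding v_def e_def m_def by force
    obtain l where l: "0 < l" "l \<le> CARD('n)" "1 \<le> mpow A l c c"
      using crit_cycle[OF A ct(1)] by blast
    define D where "D = (k' - k) * q"
    have "l dvd D" using dv l unfolding D_def by simp
    then obtain r where r: "D = l * r" by (auto elim: dvdE)
    have Dc: "1 \<le> mpow A D c c" using pow_cycle[OF A l(3)] r by simp
    have m': "k' * q + j = t + (D + (m - t))"
    proof -
      have "k' * q = k * q + (k' - k) * q" using kk by (simp add: algebra_simps diff_mult_distrib)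
      then show ?thesis unfolding D_def m_def using ct(2) m_def by simp
    qed
    have pw: "mpow A (k' * q + j) = mpow A t \<otimes>\<^sub>m (mpow A D \<otimes>\<^sub>m mpow A (m - t))"
      unfolding m' by (simp add: mpow_add[OF A])
    have nn: "\<And>n x y. 0 \<le> mpow A n x y" by (rule mpow_nonneg_entry[OF A])
    have "v k \<le> mpow A t a c * mpow A (m - t) c b" by (rule ct(3))
    also have "\<dots> \<le> mpow A t a c * (mpow A D c c * mpow A (m - t) c b)"
    proof (rule mult_left_mono[OF _ nn])
      have "1 * mpow A (m - t) c b \<le> mpow A D c c * mpow A (m - t) c b"
        by (rule mult_right_mono[OF Dc nn])
      then show "mpow A (m - t) c b \<le> mpow A D c c * mpow A (m - t) c b" by simp
    qed
    also have "\<dots> \<le> mpow A t a c * (mpow A D \<otimes>\<^sub>m mpow A (m - t)) c b"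
      by (rule mult_left_mono[OF entry_ge nn])
    also have "\<dots> \<le> (mpow A t \<otimes>\<^sub>m (mpow A D \<otimes>\<^sub>m mpow A (m - t))) a b"
      by (rule entry_ge)
    also have "\<dots> = v k'" unfolding v_def pw ..
    finally show ?thesis .
  qed
  have "convergent v"
  proof (rule conv_crit[OF _ _ e0 mono])
    show "\<And>k. 0 \<le> v k" unfolding v_def by (rule mpow_nonneg_entry[OF A])
    show "\<And>k. v k \<le> M ^ CARD('n)" unfolding v_def using mpow_bounded[OF A M(2) M(1) mu] by blast
  qed
  then show ?thesis unfolding v_def .
qed

lemma comm_pow1:
  assumes X: "nonneg_mat X" and Y: "nonneg_mat Y" and c: "X \<otimes>\<^sub>m Y = Y \<otimes>\<^sub>m X"
  shows "mpow X a \<otimes>\<^sub>m Y = Y \<otimes>\<^sub>m mpow X a"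
proof (induction a)
  case 0 then show ?case by (simp add: mone_left[OF Y] mone_right[OF Y])
next
  case (Suc a)
  have nX: "nonneg_mat (mpow X a)" by (rule nonneg_mpow[OF X])
  have "mpow X (Suc a) \<otimes>\<^sub>m Y = mpow X a \<otimes>\<^sub>m (X \<otimes>\<^sub>m Y)"
    by (simp add: mmult_assoc[OF nX Y])
  also have "\<dots> = mpow X a \<otimes>\<^sub>m (Y \<otimes>\<^sub>m X)" by (simp add: c)
  also have "\<dots> = (mpow X a \<otimes>\<^sub>m Y) \<otimes>\<^sub>m X" by (simp add: mmult_assoc[OF nX X])
  also have "\<dots> = (Y \<otimes>\<^sub>m mpow X a) \<otimes>\<^sub>m X" by (simp add: Suc)
  also have "\<dots> = Y \<otimes>\<^sub>m mpow X (Suc a)" by (simp add: mmult_assoc[OF Y X])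
  finally show ?case .
qed

lemma comm_pow2:
  assumes X: "nonneg_mat X" and Y: "nonneg_mat Y" and c: "X \<otimes>\<^sub>m Y = Y \<otimes>\<^sub>m X"
  shows "mpow X a \<otimes>\<^sub>m mpow Y b = mpow Y b \<otimes>\<^sub>m mpow X a"
proof -
  have "mpow X a \<otimes>\<^sub>m Y = Y \<otimes>\<^sub>m mpow X a" by (rule comm_pow1[OF X Y c])
  then have "mpow Y b \<otimes>\<^sub>m mpow X a = mpow X a \<otimes>\<^sub>m mpow Y b"
    by (intro comm_pow1[OF Y nonneg_mpow[OF X]]) simp
  then show ?thesis by simp
qed

definition Qp :: "(nat \<Rightarrow> ('n::finite) mat) \<Rightarrow> nat list \<Rightarrow> (nat \<Rightarrow> nat) \<Rightarrow> 'n mat" where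
  "Qp A is e = foldl (\<otimes>\<^sub>m) mone (map (\<lambda>i. mpow (A i) (e i)) is)"

lemma Qp_Nil: "Qp A [] e = mone" by (simp add: Qp_def)

lemma Qp_snoc: "Qp A (is @ [i]) e = Qp A is e \<otimes>\<^sub>m mpow (A i) (e i)"
  by (simp add: Qp_def)

lemma Qp_nonneg: "\<forall>i\<in>set is. nonneg_mat (A i) \<Longrightarrow> nonneg_mat (Qp A is e)"
  by (induction "is" rule: rev_induct) (auto simp: Qp_Nil Qp_snoc nonneg_mone intro!: nonneg_mult nonneg_mpow)

lemma Qp_cong: "\<forall>i\<in>set is. e i = e' i \<Longrightarrow> Qp A is e = Qp A is e'"
  unfolding Qp_def by (metis (mono_tags, lifting) map_eq_conv)

lemma Qp_zero: "\<forall>i\<in>set is. e i = 0 \<Longrightarrow> Qp A is e = mone"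
  by (induction "is" rule: rev_induct) (auto simp: Qp_Nil Qp_snoc mone_left nonneg_mone)

lemma Qp_comm:
  assumes nn: "\<forall>i\<in>set is. nonneg_mat (A i)" and Z: "nonneg_mat Z"
    and c: "\<forall>i\<in>set is. Z \<otimes>\<^sub>m mpow (A i) (e i) = mpow (A i) (e i) \<otimes>\<^sub>m Z"
  shows "Z \<otimes>\<^sub>m Qp A is e = Qp A is e \<otimes>\<^sub>m Z"
  using nn c
proof (induction "is" rule: rev_induct)
  case Nil then show ?case by (simp add: Qp_Nil mone_left[OF Z] mone_right[OF Z])
next
  case (snoc i "is")
  let ?Q = "Qp A is e" and ?F = "mpow (A i) (e i)"
  have nQ: "nonneg_mat ?Q" using snoc by (intro Qp_nonneg) auto
  have nF: "nonneg_mat ?F" using snoc by (intro nonneg_mpow) auto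
  have IH: "Z \<otimes>\<^sub>m ?Q = ?Q \<otimes>\<^sub>m Z" using snoc by auto
  have cF: "Z \<otimes>\<^sub>m ?F = ?F \<otimes>\<^sub>m Z" using snoc by auto
  have "Z \<otimes>\<^sub>m (?Q \<otimes>\<^sub>m ?F) = (Z \<otimes>\<^sub>m ?Q) \<otimes>\<^sub>m ?F" by (simp add: mmult_assoc[OF Z nF])
  also have "\<dots> = (?Q \<otimes>\<^sub>m Z) \<otimes>\<^sub>m ?F" by (simp add: IH)
  also have "\<dots> = ?Q \<otimes>\<^sub>m (Z \<otimes>\<^sub>m ?F)" by (simp add: mmult_assoc[OF nQ nF])
  also have "\<dots> = ?Q \<otimes>\<^sub>m (?F \<otimes>\<^sub>m Z)" by (simp add: cF)
  also have "\<dots> = (?Q \<otimes>\<^sub>m ?F) \<otimes>\<^sub>m Z" by (simp add: mmult_assoc[OF nQ Z])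
  finally show ?case by (simp add: Qp_snoc)
qed

lemma Qp_add:
  assumes nn: "\<forall>i\<in>set is. nonneg_mat (A i)"
    and c: "\<forall>r\<in>set is. \<forall>s\<in>set is. A r \<otimes>\<^sub>m A s = A s \<otimes>\<^sub>m A r"
  shows "Qp A is e \<otimes>\<^sub>m Qp A is e' = Qp A is (\<lambda>i. e i + e' i)"
  using nn c
proof (induction "is" rule: rev_induct)
  case Nil then show ?case by (simp add: Qp_Nil mone_left nonneg_mone)
next
  case (snoc i "is")
  let ?Q = "Qp A is e" and ?F = "mpow (A i) (e i)"
  let ?Q' = "Qp A is e'" and ?F' = "mpow (A i) (e' i)"
  have nA: "nonneg_mat (A i)" using snoc by auto
  have nQ: "nonneg_mat ?Q" "nonneg_mat ?Q'" using snoc by (auto intro!: Qp_nonneg)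
  have nF: "nonneg_mat ?F" "nonneg_mat ?F'" using snoc by (auto intro!: nonneg_mpow)
  have IH: "?Q \<otimes>\<^sub>m ?Q' = Qp A is (\<lambda>i. e i + e' i)" using snoc by auto
  have cF: "?F \<otimes>\<^sub>m ?Q' = ?Q' \<otimes>\<^sub>m ?F"
  proof (rule Qp_comm)
    show "\<forall>i\<in>set is. nonneg_mat (A i)" using snoc by auto
    show "nonneg_mat ?F" by (rule nF)
    show "\<forall>k\<in>set is. ?F \<otimes>\<^sub>m mpow (A k) (e' k) = mpow (A k) (e' k) \<otimes>\<^sub>m ?F"
      using snoc by (auto intro!: comm_pow2)
  qed
  have "(?Q \<otimes>\<^sub>m ?F) \<otimes>\<^sub>m (?Q' \<otimes>\<^sub>m ?F') = ?Q \<otimes>\<^sub>m (?F \<otimes>\<^sub>m (?Q' \<otimes>\<^sub>m ?F'))"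
    by (rule mmult_assoc[OF nQ(1) nonneg_mult[OF nQ(2) nF(2)]])
  also have "?F \<otimes>\<^sub>m (?Q' \<otimes>\<^sub>m ?F') = (?F \<otimes>\<^sub>m ?Q') \<otimes>\<^sub>m ?F'"
    by (rule mmult_assoc[OF nF(1) nF(2), symmetric])
  also have "\<dots> = (?Q' \<otimes>\<^sub>m ?F) \<otimes>\<^sub>m ?F'" by (simp add: cF)
  also have "\<dots> = ?Q' \<otimes>\<^sub>m (?F \<otimes>\<^sub>m ?F')" by (rule mmult_assoc[OF nQ(2) nF(2)])
  also have "?Q \<otimes>\<^sub>m (?Q' \<otimes>\<^sub>m (?F \<otimes>\<^sub>m ?F')) = (?Q \<otimes>\<^sub>m ?Q') \<otimes>\<^sub>m (?F \<otimes>\<^sub>m ?F')"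
    by (rule mmult_assoc[OF nQ(1) nonneg_mult[OF nF], symmetric])
  also have "\<dots> = Qp A is (\<lambda>i. e i + e' i) \<otimes>\<^sub>m mpow (A i) (e i + e' i)"
    by (simp add: IH mpow_add[OF nA])
  finally show ?case by (simp add: Qp_snoc)
qed

lemma Qp_delta:
  assumes "distinct is" "x \<in> set is" "\<forall>i\<in>set is. nonneg_mat (A i)"
  shows "Qp A is (\<lambda>i. if i = x then 1 else 0) = A x"
  using assms
proof (induction "is" rule: rev_induct)
  case Nil then show ?case by simp
next
  case (snoc i "is")
  show ?case
  proof (cases "i = x")
    case True
    then have "x \<notin> set is" using snoc by auto
    then have "Qp A is (\<lambda>i. if i = x then 1 else 0) = mone" by (intro Qp_zero) auto
    then show ?thesis using True snoc by (simp add: Qp_snoc mone_left mpow_one)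
  next
    case False
    then have "Qp A is (\<lambda>i. if i = x then 1 else 0) = A x" using snoc by auto
    then show ?thesis using False snoc by (simp add: Qp_snoc mone_right)
  qed
qed

lemma word_Qp:
  assumes "distinct is" "set w \<subseteq> set is" "\<forall>i\<in>set is. nonneg_mat (A i)"
    and c: "\<forall>r\<in>set is. \<forall>s\<in>set is. A r \<otimes>\<^sub>m A s = A s \<otimes>\<^sub>m A r"
  shows "word_mat A w = Qp A is (count_list w)"
  using assms(2)
proof (induction w)
  case Nil then show ?case by (simp add: Qp_zero)
next
  case (Cons x xs)
  have x: "x \<in> set is" using Cons by auto
  have "word_mat A (x # xs) = Qp A is (count_list xs) \<otimes>\<^sub>m Qp A is (\<lambda>i. if i = x then 1 else 0)"
    using Cons Qp_delta[OF assms(1) x assms(3)] by simp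
  also have "\<dots> = Qp A is (\<lambda>i. count_list xs i + (if i = x then 1 else 0))"
    by (rule Qp_add[OF assms(3) c])
  also have "\<dots> = Qp A is (count_list (x # xs))"
    by (rule Qp_cong) auto
  finally show ?case .
qed

lemma mpow_Qp:
  assumes nn: "\<forall>i\<in>set is. nonneg_mat (A i)"
    and c: "\<forall>r\<in>set is. \<forall>s\<in>set is. A r \<otimes>\<^sub>m A s = A s \<otimes>\<^sub>m A r"
  shows "mpow (Qp A is e) m = Qp A is (\<lambda>i. e i * m)"
proof (induction m)
  case 0 then show ?case by (simp add: Qp_zero)
next
  case (Suc m)
  have "mpow (Qp A is e) (Suc m) = Qp A is (\<lambda>i. e i * m) \<otimes>\<^sub>m Qp A is e" by (simp add: Suc)
  also have "\<dots> = Qp A is (\<lambda>i. e i * m + e i)" by (rule Qp_add[OF nn c])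
  also have "\<dots> = Qp A is (\<lambda>i. e i * Suc m)" by (rule Qp_cong) simp
  finally show ?case .
qed

lemma tendsto_Max_fin:
  fixes f :: "nat \<Rightarrow> 'a \<Rightarrow> real"
  assumes "finite S" "S \<noteq> {}" "\<forall>c\<in>S. (\<lambda>k. f k c) \<longlonglongrightarrow> l c"
  shows "(\<lambda>k. Max ((\<lambda>c. f k c) ` S)) \<longlonglongrightarrow> Max (l ` S)"
  using assms
proof (induction S rule: finite_ne_induct)
  case (singleton x) then show ?case by simp
next
  case (insert x S)
  have "(\<lambda>k. max (f k x) (Max ((\<lambda>c. f k c) ` S))) \<longlonglongrightarrow> max (l x) (Max (l ` S))"
    using insert by (intro tendsto_max) auto
  then show ?case using insert by simp
qed

lemma mconv_mult:
  assumes "mconv X L" "mconv Y M"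
  shows "mconv (\<lambda>k. X k \<otimes>\<^sub>m Y k) (L \<otimes>\<^sub>m M)"
  unfolding mconv_def mmult_def
proof (intro allI)
  fix a b
  show "(\<lambda>k. Max (range (\<lambda>c. X k a c * Y k c b))) \<longlonglongrightarrow> Max (range (\<lambda>c. L a c * M c b))"
    using assms unfolding mconv_def by (intro tendsto_Max_fin tendsto_mult ballI) auto
qed

lemma mconv_const: "mconv (\<lambda>k. X) X"
  unfolding mconv_def by simp

lemma mconv_pow: "mconv X L \<Longrightarrow> mconv (\<lambda>k. mpow (X k) p) (mpow L p)"
  by (induction p) (auto simp: mconv_const intro: mconv_mult)

lemma mconv_foldl:
  "mconv X Y \<Longrightarrow> \<forall>i\<in>set is. mconv (F i) (G i) \<Longrightarrow>
   mconv (\<lambda>k. foldl (\<otimes>\<^sub>m) (X k) (map (\<lambda>i. F i k) is)) (foldl (\<otimes>\<^sub>m) Y (map G is))"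
proof (induction "is" arbitrary: X Y)
  case Nil then show ?case by simp
next
  case (Cons i "is")
  have "mconv (\<lambda>k. X k \<otimes>\<^sub>m F i k) (Y \<otimes>\<^sub>m G i)" using Cons by (intro mconv_mult) auto
  then show ?case using Cons.IH[of "\<lambda>k. X k \<otimes>\<^sub>m F i k" "Y \<otimes>\<^sub>m G i"] Cons.prems by simp
qed

theorem theorem3p2:
  fixes A :: "nat \<Rightarrow> ('n::finite) mat" and N p :: nat and w :: "nat list"
  assumes nonneg: "\<forall>i\<in>{1..N}. nonneg_mat (A i)"
    and comm: "\<forall>r\<in>{1..N}. \<forall>s\<in>{1..N}. A r \<otimes>\<^sub>m A s = A s \<otimes>\<^sub>m A r"
    and mu: "\<forall>i\<in>{1..N}. mcgm (A i) \<le> 1"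
    and len: "length w = p"
    and word: "set w \<subseteq> {1..N}"
  shows "\<exists>q::nat. 0 < q \<and> (\<forall>j\<in>{1..q}. \<exists>L :: nat \<Rightarrow> 'n mat.
           (\<forall>i\<in>{1..N}. mconv (\<lambda>k. mpow (A i) (k * q + j)) (L i)) \<and>
           mconv (\<lambda>k. mpow (word_mat A w) (k * q + j))
                 (mprod_list (map (\<lambda>i. mpow (L i) (count_list w i)) [1..<N+1])))"
proof -
  define q :: nat where "q = fact (CARD('n))"
  have q0: "0 < q" unfolding q_def by simp
  have dv: "\<forall>l. 0 < l \<longrightarrow> l \<le> CARD('n) \<longrightarrow> l dvd q"
    unfolding q_def by (auto intro: dvd_fact)
  define "is" where "is = [1..<N+1]"
  have set_is: "set is = {1..N}" unfolding is_def by auto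
  have dist: "distinct is" unfolding is_def by simp
  have nn: "\<forall>i\<in>set is. nonneg_mat (A i)" using nonneg set_is by simp
  have cm: "\<forall>r\<in>set is. \<forall>s\<in>set is. A r \<otimes>\<^sub>m A s = A s \<otimes>\<^sub>m A r" using comm set_is by simp
  have "\<forall>j\<in>{1..q}. \<exists>L :: nat \<Rightarrow> 'n mat.
           (\<forall>i\<in>{1..N}. mconv (\<lambda>k. mpow (A i) (k * q + j)) (L i)) \<and>
           mconv (\<lambda>k. mpow (word_mat A w) (k * q + j))
                 (mprod_list (map (\<lambda>i. mpow (L i) (count_list w i)) [1..<N+1]))"
  proof
    fix j
    define L where "L = (\<lambda>i a b. lim (\<lambda>k. mpow (A i) (k * q + j) a b))"
    have LC: "mconv (\<lambda>k. mpow (A i) (k * q + j)) (L i)" if i: "i \<in> {1..N}" for i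
      unfolding mconv_def L_def
    proof (intro allI)
      fix a b
      have "convergent (\<lambda>k. mpow (A i) (k * q + j) a b)"
        by (rule conv_single[OF _ _ q0 dv]) (use i nonneg mu in auto)
      then show "(\<lambda>k. mpow (A i) (k * q + j) a b) \<longlonglongrightarrow> lim (\<lambda>k. mpow (A i) (k * q + j) a b)"
        by (simp add: convergent_LIMSEQ_iff)
    qed
    have seq: "mpow (word_mat A w) (k * q + j) =
        foldl (\<otimes>\<^sub>m) mone (map (\<lambda>i. mpow (mpow (A i) (k * q + j)) (count_list w i)) is)" for k
    proof -
      have "mpow (word_mat A w) (k * q + j) = mpow (Qp A is (count_list w)) (k * q + j)"
        using word_Qp[OF dist _ nn cm] word set_is by simp
      also have "\<dots> = Qp A is (\<lambda>i. count_list w i * (k * q + j))" by (rule mpow_Qp[OF nn cm])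
      also have "\<dots> = foldl (\<otimes>\<^sub>m) mone (map (\<lambda>i. mpow (mpow (A i) (k * q + j)) (count_list w i)) is)"
        unfolding Qp_def
      proof (intro arg_cong[where f = "foldl (\<otimes>\<^sub>m) mone"] map_cong refl)
        fix i assume "i \<in> set is"
        then have "nonneg_mat (A i)" using nn by auto
        then show "mpow (A i) (count_list w i * (k * q + j)) = mpow (mpow (A i) (k * q + j)) (count_list w i)"
          using mpow_mult[of "A i" "k * q + j" "count_list w i"] by (simp add: mult.commute)
      qed
      finally show ?thesis .
    qed
    have "mconv (\<lambda>k. foldl (\<otimes>\<^sub>m) mone (map (\<lambda>i. mpow (mpow (A i) (k * q + j)) (count_list w i)) is))
                (foldl (\<otimes>\<^sub>m) mone (map (\<lambda>i. mpow (L i) (count_list w i)) is))"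
      by (rule mconv_foldl[OF mconv_const]) (use LC set_is in \<open>auto intro!: mconv_pow\<close>)
    then have "mconv (\<lambda>k. mpow (word_mat A w) (k * q + j))
                 (mprod_list (map (\<lambda>i. mpow (L i) (count_list w i)) [1..<N+1]))"
      unfolding mprod_list_def seq is_def .
    then show "\<exists>L :: nat \<Rightarrow> 'n mat.
           (\<forall>i\<in>{1..N}. mconv (\<lambda>k. mpow (A i) (k * q + j)) (L i)) \<and>
           mconv (\<lambda>k. mpow (word_mat A w) (k * q + j))
                 (mprod_list (map (\<lambda>i. mpow (L i) (count_list w i)) [1..<N+1]))"
      using LC by blast
  qed
  then show ?thesis using q0 by blast
qed

end
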